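(* For every integer $m\geqslant 3$, the binary extended Hamming code $\overline{\mathcal{H}}_m$ of length $2^m$ is log-concave.
   Context: The binary Hamming code $\mathcal{H}_m$ is the binary linear code of length $2^m-1$ whose parity-check matrix has as columns all nonzero vectors of $\mathbb{F}_2^m$; the extended Hamming code $\overline{\mathcal{H}}_m$ is obtained by appending an overall parity-check coordinate to every codeword of $\mathcal{H}_m$ (equivalently, it is the dual of the first order binary Reed–Muller code $\mathcal R(1,m)$). For a linear code of length $n$, $A_i$ is the number of codewords of weight $i$. The nonzero weight distribution is the subsequence $a_0,\dots,a_N$ of $A_0,\dots,A_n$ consisting of its nonzero values, in order. A sequence is log-concave if $a_i^2\geqslant a_{i-1}a_{i+1}$ for all $1\leqslant i\leqslant N-1$; a linear code is log-concave if its nonzero weight distribution is log-concave. *)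

theory Defs
  imports Main
begin

text \<open>Vectors of F_2^m are boolean lists of length m (True = 1).
  A binary word is represented by its support (set of coordinates carrying 1);
  its Hamming weight is the cardinality of the support.\<close>

definition vecs :: "nat \<Rightarrow> bool list set" where
  "vecs m = {v. length v = m}"

definition nonzero_vecs :: "nat \<Rightarrow> bool list set" where
  "nonzero_vecs m = vecs m - {replicate m False}"

text \<open>Binary Hamming code H_m: coordinates are indexed by the nonzero vectors of F_2^m
  (the columns of the parity-check matrix, 2^m - 1 of them); a word (support S) is a codeword
  iff the sum of the columns in S is zero in F_2^m, i.e. every coordinate i < m is 1 in an
  even number of the columns of S.\<close>

definition hamming_code :: "nat \<Rightarrow> bool list set set" where
  "hamming_code m = {S. S \<subseteq> nonzero_vecs m \<and> (\<forall>i<m. even (card {v\<in>S. v ! i}))}"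

text \<open>Extended Hamming code: coordinates Some v (v nonzero) plus the appended overall
  parity-check coordinate None; the parity bit is 1 iff the codeword has odd weight.\<close>

definition ext_hamming_code :: "nat \<Rightarrow> bool list option set set" where
  "ext_hamming_code m =
     (\<lambda>S. Some ` S \<union> (if odd (card S) then {None} else {})) ` hamming_code m"

definition weight_count :: "'a set set \<Rightarrow> nat \<Rightarrow> nat" where
  "weight_count C i = card {c \<in> C. card c = i}"

definition nonzero_weight_distribution :: "nat \<Rightarrow> 'a set set \<Rightarrow> nat list" where
  "nonzero_weight_distribution n C = filter (\<lambda>x. x \<noteq> 0) (map (weight_count C) [0..<Suc n])"

definition log_concave_seq :: "nat list \<Rightarrow> bool" where
  "log_concave_seq a \<longleftrightarrow>
     (\<forall>i. 1 \<le> i \<and> i + 1 < length a \<longrightarrow> a ! (i - 1) * a ! (i + 1) \<le> (a ! i)^2)"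

definition log_concave_code :: "nat \<Rightarrow> 'a set set \<Rightarrow> bool" where
  "log_concave_code n C \<longleftrightarrow> log_concave_seq (nonzero_weight_distribution n C)"

end

theory Submission
  imports Defs Complex_Main
begin


definition cnt :: "bool list set \<Rightarrow> nat \<Rightarrow> nat" where
  "cnt T i = card {v\<in>T. v!i}"

definition zs :: "nat \<Rightarrow> bool list set \<Rightarrow> bool" where
  "zs m T \<longleftrightarrow> (\<forall>i<m. even (cnt T i))"

definition sig :: "nat \<Rightarrow> bool list set \<Rightarrow> bool list" where
  "sig m T = map (\<lambda>i. odd (cnt T i)) [0..<m]"

definition Zs :: "nat \<Rightarrow> nat \<Rightarrow> bool list set set" where
  "Zs m k = {T. T \<subseteq> vecs m \<and> card T = k \<and> zs m T}"

lemma vecs_eq: "vecs m = {xs. set xs \<subseteq> UNIV \<and> length xs = m}"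
  by (simp add: vecs_def)

lemma finite_vecs: "finite (vecs m)"
  unfolding vecs_eq by (rule finite_lists_length_eq) simp

lemma card_vecs: "card (vecs m) = 2 ^ m"
  unfolding vecs_eq by (subst card_lists_length_eq) simp_all

lemma cnt_insert:
  assumes "finite T" "x \<notin> T"
  shows "cnt (insert x T) i = cnt T i + (if x!i then 1 else 0)"
proof -
  have "{v\<in>insert x T. v!i} = (if x!i then insert x {v\<in>T. v!i} else {v\<in>T. v!i})"
    by auto
  then show ?thesis using assms unfolding cnt_def by auto
qed

lemma sig_vecs: "sig m T \<in> vecs m"
  by (simp add: sig_def vecs_def)

lemma zs_insert:
  assumes "finite T" "x \<notin> T" "length x = m"
  shows "zs m (insert x T) \<longleftrightarrow> x = sig m T"
proof -
  have "zs m (insert x T) \<longleftrightarrow> (\<forall>i<m. x!i = odd (cnt T i))"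
    unfolding zs_def using assms by (auto simp: cnt_insert)
  also have "\<dots> \<longleftrightarrow> x = sig m T"
  proof
    assume h: "\<forall>i<m. x!i = odd (cnt T i)"
    show "x = sig m T" by (rule nth_equalityI) (use assms(3) h in \<open>auto simp: sig_def\<close>)
  next
    assume h: "x = sig m T"
    show "\<forall>i<m. x!i = odd (cnt T i)" using h by (simp add: sig_def)
  qed
  finally show ?thesis .
qed

lemma sig_insert:
  assumes "finite T" "x \<notin> T" "length x = m"
  shows "sig m (insert x T) = x \<longleftrightarrow> zs m T"
proof -
  have "sig m (insert x T) = x \<longleftrightarrow> (\<forall>i<m. odd (cnt (insert x T) i) = x!i)"
  proof
    assume h: "sig m (insert x T) = x"
    show "\<forall>i<m. odd (cnt (insert x T) i) = x!i"
    proof (intro allI impI)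
      fix i assume "i < m"
      then show "odd (cnt (insert x T) i) = x!i" using arg_cong[OF h, of "\<lambda>l. l!i"]
        by (simp add: sig_def)
    qed
  next
    assume h: "\<forall>i<m. odd (cnt (insert x T) i) = x!i"
    show "sig m (insert x T) = x" by (rule nth_equalityI) (use assms(3) h in \<open>auto simp: sig_def\<close>)
  qed
  also have "\<dots> \<longleftrightarrow> (\<forall>i<m. odd (cnt T i + (if x!i then 1 else 0)) = x!i)"
    using assms by (simp add: cnt_insert)
  also have "\<dots> \<longleftrightarrow> zs m T"
    unfolding zs_def by (auto split: if_splits)
  finally show ?thesis .
qed

lemma finite_of_vecs: "T \<subseteq> vecs m \<Longrightarrow> finite T"
  using finite_vecs finite_subset by blast

lemma remove_zs:
  assumes "T \<subseteq> vecs m" "zs m T" "x \<in> T"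
  shows "sig m (T - {x}) = x"
proof -
  have f: "finite (T - {x})" using assms finite_of_vecs by blast
  have l: "length x = m" using assms by (auto simp: vecs_def)
  have "insert x (T - {x}) = T" using assms(3) by blast
  then show ?thesis using zs_insert[OF f _ l] assms(2) by simp
qed

lemma add_sig:
  assumes "T \<subseteq> vecs m" "sig m T \<notin> T"
  shows "zs m (insert (sig m T) T)"
proof -
  have f: "finite T" using assms finite_of_vecs by blast
  show ?thesis using zs_insert[OF f assms(2)] by (simp add: sig_def)
qed

lemma remove_sig:
  assumes "T \<subseteq> vecs m" "sig m T \<in> T"
  shows "zs m (T - {sig m T})"
proof -
  have f: "finite (T - {sig m T})" using assms finite_of_vecs by blast
  have e: "insert (sig m T) (T - {sig m T}) = T" using assms(2) by blast
  have "length (sig m T) = m" by (simp add: sig_def)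
  from sig_insert[OF f _ this] e show ?thesis by simp
qed

lemma add_zs:
  assumes "R \<subseteq> vecs m" "zs m R" "x \<in> vecs m" "x \<notin> R"
  shows "sig m (insert x R) = x"
proof -
  have f: "finite R" using assms finite_of_vecs by blast
  have "length x = m" using assms by (simp add: vecs_def)
  from sig_insert[OF f assms(4) this] assms(2) show ?thesis by simp
qed

lemma finite_Zs: "finite (Zs m j)"
proof -
  have "Zs m j \<subseteq> Pow (vecs m)" by (auto simp: Zs_def)
  then show ?thesis using finite_vecs finite_subset by blast
qed

lemma recurrence:
  "(2^m choose Suc k) = Suc (Suc k) * card (Zs m (Suc (Suc k))) + (2^m - k) * card (Zs m k)"
proof -
  define P where "P = {T. T \<subseteq> vecs m \<and> card T = Suc k}"
  define P1 where "P1 = {T\<in>P. sig m T \<notin> T}"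
  define P2 where "P2 = {T\<in>P. sig m T \<in> T}"
  define Q1 where "Q1 = Sigma (Zs m (Suc (Suc k))) (\<lambda>R. R)"
  define Q2 where "Q2 = Sigma (Zs m k) (\<lambda>R. vecs m - R)"
  have finP: "finite P"
  proof -
    have "P \<subseteq> Pow (vecs m)" by (auto simp: P_def)
    then show ?thesis using finite_vecs finite_subset by blast
  qed
  have cP: "card P = 2^m choose Suc k"
    unfolding P_def by (simp add: n_subsets finite_vecs card_vecs)
  have "P = P1 \<union> P2" "P1 \<inter> P2 = {}" unfolding P1_def P2_def by blast+
  then have cP12: "card P = card P1 + card P2"
    using finP by (metis card_Un_disjoint finite_Un)
  have finR: "R \<in> Zs m j \<Longrightarrow> finite R" for R j
    unfolding Zs_def using finite_of_vecs by blast
  have cQ1: "card Q1 = Suc (Suc k) * card (Zs m (Suc (Suc k)))"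
  proof -
    have "card Q1 = (\<Sum>R\<in>Zs m (Suc (Suc k)). card R)"
      unfolding Q1_def using finite_Zs finR by simp
    also have "\<dots> = (\<Sum>R\<in>Zs m (Suc (Suc k)). Suc (Suc k))"
      by (rule sum.cong) (auto simp: Zs_def)
    finally show ?thesis by simp
  qed
  have cQ2: "card Q2 = (2^m - k) * card (Zs m k)"
  proof -
    have "card Q2 = (\<Sum>R\<in>Zs m k. card (vecs m - R))"
      unfolding Q2_def using finite_Zs finite_vecs by simp
    also have "\<dots> = (\<Sum>R\<in>Zs m k. 2^m - k)"
    proof (rule sum.cong)
      fix R assume "R \<in> Zs m k"
      then have "R \<subseteq> vecs m" "card R = k" by (auto simp: Zs_def)
      then show "card (vecs m - R) = 2^m - k"
        using finite_vecs card_vecs by (simp add: card_Diff_subset finite_of_vecs)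
    qed simp
    finally show ?thesis by simp
  qed
  have b1: "bij_betw (\<lambda>T. (insert (sig m T) T, sig m T)) P1 Q1"
  proof (rule bij_betw_byWitness[where f' = "\<lambda>(R,x). R - {x}"])
    show "\<forall>a\<in>P1. (case (insert (sig m a) a, sig m a) of (R, x) \<Rightarrow> R - {x}) = a"
      unfolding P1_def by auto
    show "\<forall>a'\<in>Q1. (insert (sig m (case a' of (R, x) \<Rightarrow> R - {x})) (case a' of (R, x) \<Rightarrow> R - {x}),
          sig m (case a' of (R, x) \<Rightarrow> R - {x})) = a'"
    proof
      fix a' assume "a' \<in> Q1"
      then obtain R x where a': "a' = (R,x)" "R \<in> Zs m (Suc (Suc k))" "x \<in> R"
        unfolding Q1_def by auto
      have "sig m (R - {x}) = x" using remove_zs[of R m x] a' by (simp add: Zs_def)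
      moreover have "insert x (R - {x}) = R" using a' by blast
      ultimately show "(insert (sig m (case a' of (R, x) \<Rightarrow> R - {x})) (case a' of (R, x) \<Rightarrow> R - {x}),
          sig m (case a' of (R, x) \<Rightarrow> R - {x})) = a'" using a' by simp
    qed
    show "(\<lambda>T. (insert (sig m T) T, sig m T)) ` P1 \<subseteq> Q1"
    proof
      fix y assume "y \<in> (\<lambda>T. (insert (sig m T) T, sig m T)) ` P1"
      then obtain T where T: "T \<in> P1" "y = (insert (sig m T) T, sig m T)" by auto
      have T1: "T \<subseteq> vecs m" "card T = Suc k" "sig m T \<notin> T" using T by (auto simp: P1_def P_def)
      have fT: "finite T" using T1 finite_of_vecs by blast
      have "zs m (insert (sig m T) T)" using add_sig T1 by blast
      moreover have "card (insert (sig m T) T) = Suc (Suc k)" using fT T1 by simp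
      moreover have "insert (sig m T) T \<subseteq> vecs m" using T1 sig_vecs by blast
      ultimately show "y \<in> Q1" using T(2) by (simp add: Q1_def Zs_def)
    qed
    show "(\<lambda>(R, x). R - {x}) ` Q1 \<subseteq> P1"
    proof
      fix y assume "y \<in> (\<lambda>(R, x). R - {x}) ` Q1"
      then obtain R x where a': "y = R - {x}" "R \<in> Zs m (Suc (Suc k))" "x \<in> R"
        unfolding Q1_def by auto
      have R1: "R \<subseteq> vecs m" "card R = Suc (Suc k)" "zs m R" using a' by (auto simp: Zs_def)
      have "sig m (R - {x}) = x" using remove_zs R1 a' by blast
      moreover have "card (R - {x}) = Suc k" using R1 a' by simp
      moreover have "R - {x} \<subseteq> vecs m" using R1 by blast
      ultimately show "y \<in> P1" using a' by (simp add: P1_def P_def)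
    qed
  qed
  have b2: "bij_betw (\<lambda>T. (T - {sig m T}, sig m T)) P2 Q2"
  proof (rule bij_betw_byWitness[where f' = "\<lambda>(R,x). insert x R"])
    show "\<forall>a\<in>P2. (case (a - {sig m a}, sig m a) of (R, x) \<Rightarrow> insert x R) = a"
      unfolding P2_def by auto
    show "\<forall>a'\<in>Q2. (\<lambda>T. (T - {sig m T}, sig m T)) (case a' of (R, x) \<Rightarrow> insert x R) = a'"
    proof
      fix a' assume "a' \<in> Q2"
      then obtain R x where a': "a' = (R,x)" "R \<in> Zs m k" "x \<in> vecs m" "x \<notin> R"
        unfolding Q2_def by auto
      have "sig m (insert x R) = x" using add_zs[of R m x] a' by (simp add: Zs_def)
      moreover have "insert x R - {x} = R" using a' by blast
      ultimately show "(\<lambda>T. (T - {sig m T}, sig m T)) (case a' of (R, x) \<Rightarrow> insert x R) = a'"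
        using a' by simp
    qed
    show "(\<lambda>T. (T - {sig m T}, sig m T)) ` P2 \<subseteq> Q2"
    proof
      fix y assume "y \<in> (\<lambda>T. (T - {sig m T}, sig m T)) ` P2"
      then obtain T where T: "T \<in> P2" "y = (T - {sig m T}, sig m T)" by auto
      have T1: "T \<subseteq> vecs m" "card T = Suc k" "sig m T \<in> T" using T by (auto simp: P2_def P_def)
      have fT: "finite T" using T1 finite_of_vecs by blast
      have "zs m (T - {sig m T})" using remove_sig T1 by blast
      moreover have "card (T - {sig m T}) = k" using fT T1 by simp
      moreover have "T - {sig m T} \<subseteq> vecs m" using T1 by blast
      ultimately show "y \<in> Q2" using T(2) sig_vecs[of m T] by (simp add: Q2_def Zs_def)
    qed
    show "(\<lambda>(R, x). insert x R) ` Q2 \<subseteq> P2"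
    proof
      fix y assume "y \<in> (\<lambda>(R, x). insert x R) ` Q2"
      then obtain R x where a': "y = insert x R" "R \<in> Zs m k" "x \<in> vecs m" "x \<notin> R"
        unfolding Q2_def by auto
      have R1: "R \<subseteq> vecs m" "card R = k" "zs m R" using a' by (auto simp: Zs_def)
      have fR: "finite R" using R1 finite_of_vecs by blast
      have "sig m (insert x R) = x" using add_zs R1 a' by blast
      moreover have "card (insert x R) = Suc k" using R1 a' fR by simp
      moreover have "insert x R \<subseteq> vecs m" using R1 a' by blast
      ultimately show "y \<in> P2" using a' by (simp add: P2_def P_def)
    qed
  qed
  have "card P1 = card Q1" using b1 by (rule bij_betw_same_card)
  moreover have "card P2 = card Q2" using b2 by (rule bij_betw_same_card)
  ultimately show ?thesis using cP cP12 cQ1 cQ2 by simp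
qed


lemma cnt_zero:
  assumes "i < m"
  shows "cnt (T \<union> {replicate m False}) i = cnt T i" "cnt (T - {replicate m False}) i = cnt T i"
proof -
  have "{v\<in>T \<union> {replicate m False}. v!i} = {v\<in>T. v!i}" "{v\<in>T - {replicate m False}. v!i} = {v\<in>T. v!i}"
    using assms by auto
  then show "cnt (T \<union> {replicate m False}) i = cnt T i" "cnt (T - {replicate m False}) i = cnt T i"
    by (simp_all add: cnt_def)
qed

lemma hamming_code_zs: "hamming_code m = {S. S \<subseteq> nonzero_vecs m \<and> zs m S}"
  by (simp add: hamming_code_def zs_def cnt_def)

lemma wc_ext:
  "weight_count (ext_hamming_code m) w = (if even w then card (Zs m w) else 0)"
proof -
  define H where "H = hamming_code m"
  define z where "z = replicate m False"
  define \<phi> where "\<phi> = (\<lambda>S. Some ` S \<union> (if odd (card S) then {None} else ({}::bool list option set)))"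
  define \<Phi> where "\<Phi> = (\<lambda>S. S \<union> (if odd (card S) then {z} else {}))"
  define E where "E = {T. T \<subseteq> vecs m \<and> zs m T \<and> even (card T)}"
  have nz: "nonzero_vecs m = vecs m - {z}" by (simp add: nonzero_vecs_def z_def)
  have zv: "z \<in> vecs m" by (simp add: z_def vecs_def)
  have Hs: "S \<in> H \<Longrightarrow> S \<subseteq> vecs m \<and> z \<notin> S \<and> zs m S \<and> finite S" for S
    unfolding H_def hamming_code_zs nz using finite_of_vecs by blast
  have cphi: "card (\<phi> S) = card (\<Phi> S)" if "S \<in> H" for S
  proof -
    have "finite S" "z \<notin> S" using Hs[OF that] by auto
    moreover have "card (Some ` S) = card S" by (simp add: card_image)
    moreover have "None \<notin> Some ` S" by auto
    ultimately show ?thesis unfolding \<phi>_def \<Phi>_def by (auto simp: card_Un_disjoint)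
  qed
  have injphi: "inj_on \<phi> H"
  proof (rule inj_on_inverseI[where g = "\<lambda>X. {v. Some v \<in> X}"])
    fix S show "{v. Some v \<in> \<phi> S} = S" unfolding \<phi>_def by auto
  qed
  have injPhi: "inj_on \<Phi> H"
  proof (rule inj_on_inverseI[where g = "\<lambda>X. X - {z}"])
    fix S assume "S \<in> H" then show "\<Phi> S - {z} = S" using Hs unfolding \<Phi>_def by auto
  qed
  have imPhi: "\<Phi> ` H = E"
  proof
    show "\<Phi> ` H \<subseteq> E"
    proof
      fix T assume "T \<in> \<Phi> ` H"
      then obtain S where S: "S \<in> H" "T = \<Phi> S" by auto
      note h = Hs[OF S(1)]
      have "T \<subseteq> vecs m" using h zv S(2) unfolding \<Phi>_def by auto
      moreover have "zs m T"
      proof (cases "odd (card S)")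
        case True then show ?thesis using h S(2) cnt_zero(1)[of _ m S] unfolding \<Phi>_def zs_def z_def by auto
      next
        case False then show ?thesis using h S(2) unfolding \<Phi>_def by auto
      qed
      moreover have "even (card T)" using h S(2) unfolding \<Phi>_def by auto
      ultimately show "T \<in> E" by (simp add: E_def)
    qed
    show "E \<subseteq> \<Phi> ` H"
    proof
      fix T assume T: "T \<in> E"
      then have T1: "T \<subseteq> vecs m" "zs m T" "even (card T)" by (auto simp: E_def)
      have fT: "finite T" using T1 finite_of_vecs by blast
      define S where "S = T - {z}"
      have "S \<in> H" unfolding H_def hamming_code_zs nz S_def
        using T1 cnt_zero(2)[of _ m T] by (auto simp: zs_def z_def)
      moreover have "\<Phi> S = T"
      proof (cases "z \<in> T")
        case True
        then have "card S = card T - 1" using fT by (simp add: S_def)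
        moreover have "card T > 0" using True fT card_gt_0_iff by blast
        ultimately have "odd (card S)" using T1 by simp
        then show ?thesis using True unfolding \<Phi>_def S_def by auto
      next
        case False then show ?thesis using T1 unfolding \<Phi>_def S_def by auto
      qed
      ultimately show "T \<in> \<Phi> ` H" by blast
    qed
  qed
  have "weight_count (ext_hamming_code m) w = card {c \<in> \<phi> ` H. card c = w}"
    by (simp add: weight_count_def ext_hamming_code_def H_def \<phi>_def)
  also have "{c \<in> \<phi> ` H. card c = w} = \<phi> ` {S\<in>H. card (\<phi> S) = w}" by auto
  also have "card \<dots> = card {S\<in>H. card (\<phi> S) = w}"
    by (rule card_image) (rule inj_on_subset[OF injphi], auto)
  also have "{S\<in>H. card (\<phi> S) = w} = {S\<in>H. card (\<Phi> S) = w}" using cphi by auto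
  also have "card \<dots> = card (\<Phi> ` {S\<in>H. card (\<Phi> S) = w})"
    by (rule card_image[symmetric]) (rule inj_on_subset[OF injPhi], auto)
  also have "\<Phi> ` {S\<in>H. card (\<Phi> S) = w} = {T\<in>E. card T = w}" using imPhi by auto
  also have "{T\<in>E. card T = w} = (if even w then Zs m w else {})"
    by (auto simp: E_def Zs_def)
  finally show ?thesis by simp
qed


lemma rb_nat: "Suc k * (N choose Suc k) = (N - k) * (N choose k)"
  using times_binomial_minus1_eq[of "Suc k" N] binomial_absorb_comp[of N k] by simp

lemma rb: "k \<le> N \<Longrightarrow> real (Suc k) * real (N choose Suc k) = (real N - real k) * real (N choose k)"
proof -
  assume "k \<le> N"
  have "real (Suc k * (N choose Suc k)) = real ((N - k) * (N choose k))" using rb_nat by metis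
  then show ?thesis using \<open>k \<le> N\<close> by (simp add: of_nat_diff ring_distribs)
qed

definition bb :: "nat \<Rightarrow> nat \<Rightarrow> real" where "bb n j = real (2*n choose (2*j))"
definition cc :: "nat \<Rightarrow> nat \<Rightarrow> real" where "cc n j = (2*real n - 1) * real (n choose j)"

lemma R1:
  assumes "1 \<le> j" "j \<le> n"
  shows "bb n (j-1) * ((2*real n - 2*real j+2)*(2*real n - 2*real j+1)) = bb n j * ((2*real j)*(2*real j-1))"
proof -
  obtain i where j: "j = Suc i" using assms by (cases j) auto
  have a: "real (Suc (2*i)) * real (2*n choose Suc (2*i)) = (real (2*n) - real (2*i)) * real (2*n choose (2*i))"
    by (rule rb) (use assms j in simp)
  have b: "real (Suc (Suc (2*i))) * real (2*n choose Suc (Suc (2*i))) = (real (2*n) - real (Suc (2*i))) * real (2*n choose Suc (2*i))"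
    by (rule rb) (use assms j in simp)
  have bj: "bb n j = real (2*n choose Suc (Suc (2*i)))" by (simp add: bb_def j)
  have bi: "bb n (j-1) = real (2*n choose (2*i))" by (simp add: bb_def j)
  define u where "u = real (2*n choose (2*i))"
  define v where "v = real (2*n choose Suc (2*i))"
  define w where "w = real (2*n choose Suc (Suc (2*i)))"
  have a': "(2*real i + 1) * v = (2*real n - 2*real i) * u" using a unfolding u_def v_def by (simp add: add.commute)
  have b': "(2*real i + 2) * w = (2*real n - 2*real i - 1) * v" using b unfolding w_def v_def by (simp add: algebra_simps)
  have q: "u * ((2*real n - 2*real i)*(2*real n - 2*real i - 1)) = w * ((2*real i+2)*(2*real i+1))"
    using a' b' by algebra
  have e12: "(2*real n - 2*real j+2)*(2*real n - 2*real j+1) = (2*real n - 2*real i)*(2*real n - 2*real i - 1)"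
    by (simp add: j algebra_simps)
  have e3: "(2*real j)*(2*real j-1) = (2*real i+2)*(2*real i+1)"
    by (simp add: j algebra_simps)
  show ?thesis unfolding bj bi e12 e3 using q by (simp add: u_def w_def)
qed

lemma R2:
  assumes "j < n"
  shows "bb n (j+1) * ((2*real j+1)*(2*real j+2)) = bb n j * ((2*real n - 2*real j)*(2*real n - 2*real j-1))"
proof -
  have a: "real (Suc (2*j)) * real (2*n choose Suc (2*j)) = (real (2*n) - real (2*j)) * real (2*n choose (2*j))"
    by (rule rb) (use assms in simp)
  have b: "real (Suc (Suc (2*j))) * real (2*n choose Suc (Suc (2*j))) = (real (2*n) - real (Suc (2*j))) * real (2*n choose Suc (2*j))"
    by (rule rb) (use assms in simp)
  define u where "u = real (2*n choose (2*j))"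
  define v where "v = real (2*n choose Suc (2*j))"
  define w where "w = real (2*n choose Suc (Suc (2*j)))"
  have a': "(2*real j + 1) * v = (2*real n - 2*real j) * u" using a unfolding u_def v_def by (simp add: add.commute)
  have b': "(2*real j + 2) * w = (2*real n - 2*real j - 1) * v" using b unfolding w_def v_def by (simp add: algebra_simps)
  have "w * ((2*real j+1)*(2*real j+2)) = u * ((2*real n - 2*real j)*(2*real n - 2*real j-1))"
    using a' b' by algebra
  moreover have "bb n (j+1) = w" "bb n j = u" by (simp_all add: bb_def w_def u_def)
  ultimately show ?thesis by simp
qed

lemma R3:
  assumes "1 \<le> j" "j \<le> n"
  shows "cc n (j-1) * (real n - real j + 1) = cc n j * real j"
proof -
  obtain i where j: "j = Suc i" using assms by (cases j) auto
  have a: "real (Suc i) * real (n choose Suc i) = (real n - real i) * real (n choose i)"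
    by (rule rb) (use assms j in simp)
  have "cc n (j-1) * (real n - real j + 1) = (2*real n - 1) * ((real n - real i) * real (n choose i))"
    unfolding cc_def j by simp
  also have "\<dots> = (2*real n - 1) * (real (Suc i) * real (n choose Suc i))" using a by simp
  also have "\<dots> = cc n j * real j" unfolding cc_def j by (simp only: mult_ac)
  finally show ?thesis .
qed

lemma R4:
  assumes "j < n"
  shows "cc n (j+1) * (real j + 1) = cc n j * (real n - real j)"
proof -
  have a: "real (Suc j) * real (n choose Suc j) = (real n - real j) * real (n choose j)"
    by (rule rb) (use assms in simp)
  have "cc n (j+1) * (real j + 1) = (2*real n - 1) * (real (Suc j) * real (n choose Suc j))"
    unfolding cc_def by (simp add: mult_ac)
  also have "\<dots> = cc n j * (real n - real j)" using a unfolding cc_def by (simp only: mult_ac)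
  finally show ?thesis .
qed

lemma KB:
  assumes "3 \<le> j" "2*j \<le> n"
  shows "(2*real n-3)*(2*real n-5)*cc n j \<le> 15 * bb n j"
  using assms
proof (induction j rule: dec_induct)
  case base
  define N where "N = real (2*n)"
  have c: "real (Suc k) * real (2*n choose Suc k) = (N - real k) * real (2*n choose k)" if "k \<le> 5" for k
    using rb[of k "2*n"] that assms unfolding N_def by simp
  have d: "real (Suc k) * real (n choose Suc k) = (real n - real k) * real (n choose k)" if "k \<le> 2" for k
    using rb[of k n] that assms by simp
  define C1 where "C1 = real (2*n choose 1)"
  define C2 where "C2 = real (2*n choose 2)"
  define C3 where "C3 = real (2*n choose 3)"
  define C4 where "C4 = real (2*n choose 4)"
  define C5 where "C5 = real (2*n choose 5)"
  define C6 where "C6 = real (2*n choose 6)"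
  define D1 where "D1 = real (n choose 1)"
  define D2 where "D2 = real (n choose 2)"
  define D3 where "D3 = real (n choose 3)"
  have c1: "C1 = N" using c[of 0] unfolding C1_def by simp
  have c2: "2*C2 = (N-1)*C1" using c[of 1] unfolding C1_def C2_def by (simp add: numeral_2_eq_2)
  have c3: "3*C3 = (N-2)*C2" using c[of 2] unfolding C3_def C2_def by (simp add: numeral_eq_Suc)
  have c4: "4*C4 = (N-3)*C3" using c[of 3] unfolding C3_def C4_def by (simp add: numeral_eq_Suc)
  have c5: "5*C5 = (N-4)*C4" using c[of 4] unfolding C5_def C4_def by (simp add: numeral_eq_Suc)
  have c6: "6*C6 = (N-5)*C5" using c[of 5] unfolding C5_def C6_def by (simp add: numeral_eq_Suc)
  have d1: "D1 = real n" using d[of 0] unfolding D1_def by simp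
  have d2: "2*D2 = (real n-1)*D1" using d[of 1] unfolding D1_def D2_def by (simp add: numeral_2_eq_2)
  have d3: "3*D3 = (real n-2)*D2" using d[of 2] unfolding D3_def D2_def by (simp add: numeral_eq_Suc)
  have e2: "2*C2 = N*(N-1)" using c1 c2 by simp
  have e3: "6*C3 = N*(N-1)*(N-2)"
  proof -
    have "6*C3 = 2*(3*C3)" by simp
    also have "\<dots> = (N-2)*(2*C2)" using c3 by simp
    finally show ?thesis using e2 by simp
  qed
  have e4: "24*C4 = N*(N-1)*(N-2)*(N-3)"
  proof -
    have "24*C4 = 6*(4*C4)" by simp
    also have "\<dots> = (N-3)*(6*C3)" using c4 by simp
    finally show ?thesis using e3 by simp
  qed
  have e5: "120*C5 = N*(N-1)*(N-2)*(N-3)*(N-4)"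
  proof -
    have "120*C5 = 24*(5*C5)" by simp
    also have "\<dots> = (N-4)*(24*C4)" using c5 by simp
    finally show ?thesis using e4 by simp
  qed
  have e6: "720*C6 = N*(N-1)*(N-2)*(N-3)*(N-4)*(N-5)"
  proof -
    have "720*C6 = 120*(6*C6)" by simp
    also have "\<dots> = (N-5)*(120*C5)" using c6 by simp
    finally show ?thesis using e5 by simp
  qed
  have f2: "2*D2 = real n*(real n-1)" using d1 d2 by simp
  have f3: "6*D3 = real n*(real n-1)*(real n-2)"
  proof -
    have "6*D3 = 2*(3*D3)" by simp
    also have "\<dots> = (real n-2)*(2*D2)" using d3 by simp
    finally show ?thesis using f2 by simp
  qed
  have "720*(15*C6) = 720*((2*real n-1)*(2*real n-3)*(2*real n-5) * D3)"
  proof -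
    have "720*(15*C6) = 15*(720*C6)" by simp
    also have "\<dots> = 15*(N*(N-1)*(N-2)*(N-3)*(N-4)*(N-5))" using e6 by simp
    also have "\<dots> = 120*((2*real n-1)*(2*real n-3)*(2*real n-5)) * (real n*(real n-1)*(real n-2))"
      unfolding N_def by (simp add: algebra_simps)
    also have "\<dots> = 120*((2*real n-1)*(2*real n-3)*(2*real n-5)) * (6*D3)"
      using f3 by simp
    also have "\<dots> = 720*((2*real n-1)*(2*real n-3)*(2*real n-5) * D3)"
      by (simp add: algebra_simps)
    finally show ?thesis .
  qed
  then have "15*C6 = (2*real n-1)*(2*real n-3)*(2*real n-5) * D3" by simp
  then show ?case unfolding bb_def cc_def C6_def D3_def by (simp add: algebra_simps)
next
  case (step j)
  have IH: "(2*real n-3)*(2*real n-5)*cc n j \<le> 15 * bb n j" using step by simp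
  have r2: "bb n (j+1) * ((2*real j+1)*(2*real j+2)) = bb n j * ((2*real n - 2*real j)*(2*real n - 2*real j-1))"
    by (rule R2) (use step in simp)
  have r4: "cc n (j+1) * (real j + 1) = cc n j * (real n - real j)"
    by (rule R4) (use step in simp)
  define K where "K = (2*real n-3)*(2*real n-5)"
  have K0: "0 \<le> K" unfolding K_def using step by (intro mult_nonneg_nonneg) auto
  have cj: "0 \<le> cc n j" unfolding cc_def using step by simp
  have y: "2*real j + 2 \<le> real n" using step by simp
  have "K * cc n (j+1) * ((2*real j+1)*(2*real j+2)) = K * (cc n (j+1) * (real j + 1)) * (2*(2*real j+1))"
    by (simp add: algebra_simps)
  also have "\<dots> = K * (cc n j * (real n - real j)) * (2*(2*real j+1))" using r4 by simp
  also have "\<dots> = (K * cc n j) * ((real n - real j) * (2*(2*real j+1)))" by (simp only: mult_ac)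
  also have "\<dots> \<le> (K * cc n j) * ((2*real n - 2*real j)*(2*real n - 2*real j-1))"
  proof (rule mult_left_mono)
    show "(real n - real j) * (2 * (2 * real j + 1)) \<le> (2 * real n - 2 * real j) * (2 * real n - 2 * real j - 1)"
    proof -
      have "(real n - real j) * (2 * (2 * real j + 1)) = (2*real n - 2*real j) * (2*real j + 1)" by (simp add: algebra_simps)
      also have "\<dots> \<le> (2*real n - 2*real j) * (2*real n - 2*real j - 1)"
        using y by (intro mult_left_mono) auto
      finally show ?thesis .
    qed
    show "0 \<le> K * cc n j" using K0 cj by simp
  qed
  also have "\<dots> \<le> (15 * bb n j) * ((2*real n - 2*real j)*(2*real n - 2*real j-1))"
    using IH y unfolding K_def by (intro mult_right_mono) auto
  also have "\<dots> = (15 * bb n (j+1)) * ((2*real j+1)*(2*real j+2))" using r2 by simp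
  finally have "K * cc n (j+1) * ((2*real j+1)*(2*real j+2)) \<le> (15 * bb n (j+1)) * ((2*real j+1)*(2*real j+2))" .
  then have "K * cc n (j+1) \<le> 15 * bb n (j+1)" by (rule mult_right_le_imp_le) simp
  then show ?case unfolding K_def by simp
qed


lemma D1_lem:
  fixes b bm bp x y :: real
  assumes "6 \<le> x" "6 \<le> y"
  and R1: "bm*((y+2)*(y+1)) = b*(x*(x-1))"
  and R2: "bp*((x+1)*(x+2)) = b*(y*(y-1))"
  shows "bm*bp*((x+2)*(x+1)) \<le> b^2*(x*(x+1))"
proof -
  have e: "(bm*((y+2)*(y+1)))*(bp*((x+1)*(x+2))) = (b*(x*(x-1)))*(b*(y*(y-1)))"
    using R1 R2 by simp
  have i1: "(x*(x-1))*(y*(y-1)) \<le> (x*(x+1))*((y+2)*(y+1))"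
    using assms(1,2) by (intro mult_mono) (auto intro: mult_mono)
  have "(bm*bp*((x+2)*(x+1)))*((y+2)*(y+1)) = b^2*((x*(x-1))*(y*(y-1)))"
    using e by (simp add: ac_simps power2_eq_square)
  also have "\<dots> \<le> b^2*((x*(x+1))*((y+2)*(y+1)))"
    by (rule mult_left_mono[OF i1]) simp
  also have "\<dots> = (b^2*(x*(x+1)))*((y+2)*(y+1))" by (simp add: ac_simps)
  finally show ?thesis
    by (rule mult_right_le_imp_le) (use assms(2) in simp)
qed

lemma D2_lem:
  fixes c cm cp n j :: real
  assumes "0 \<le> j" "j \<le> n" "0 \<le> c"
  and R3: "cm*(n-j+1) = c*j"
  and R4: "cp*(j+1) = c*(n-j)"
  shows "cm*cp \<le> c^2"
proof -
  have i: "j*(n-j) \<le> (n-j+1)*(j+1)" using assms(1,2) by (simp add: algebra_simps)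
  have "(cm*cp)*((n-j+1)*(j+1)) = c^2*(j*(n-j))"
  proof -
    have "(cm*(n-j+1))*(cp*(j+1)) = (c*j)*(c*(n-j))" using R3 R4 by simp
    then show ?thesis by (simp add: ac_simps power2_eq_square)
  qed
  also have "\<dots> \<le> c^2*((n-j+1)*(j+1))" by (rule mult_left_mono[OF i]) simp
  finally show ?thesis
    by (rule mult_right_le_imp_le) (use assms in simp)
qed

lemma D3_lem:
  fixes b c bm cp x y n j :: real
  assumes "x = 2*j" "y = 2*n - 2*j" "6 \<le> x" "x \<le> y" "0 \<le> b" "0 \<le> c"
  and R1: "bm*((y+2)*(y+1)) = b*(x*(x-1))"
  and R4: "cp*(j+1) = c*(n-j)"
  shows "bm*cp \<le> b*c"
proof -
  have i: "x*(x-1)*(n-j) \<le> (y+2)*(y+1)*(j+1)"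
  proof -
    have "x*(x-1)*(n-j) = (x*(x-1)*y)/2" using assms(1,2) by simp
    also have "\<dots> \<le> ((x+2)*(y+1)*(y+2))/2"
      using assms(3,4) by (intro divide_right_mono mult_mono) auto
    also have "\<dots> = (y+2)*(y+1)*(j+1)" using assms(1) by (simp add: algebra_simps)
    finally show ?thesis .
  qed
  have "(bm*cp)*((y+2)*(y+1)*(j+1)) = (b*c)*(x*(x-1)*(n-j))"
  proof -
    have "(bm*((y+2)*(y+1)))*(cp*(j+1)) = (b*(x*(x-1)))*(c*(n-j))" using R1 R4 by simp
    then show ?thesis by (simp add: ac_simps)
  qed
  also have "\<dots> \<le> (b*c)*((y+2)*(y+1)*(j+1))" by (rule mult_left_mono[OF i]) (use assms in simp)
  finally show ?thesis
    by (rule mult_right_le_imp_le) (use assms in simp)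
qed

lemma D4_lem:
  fixes b c bp cm x y n j :: real
  assumes "x = 2*j" "y = 2*n - 2*j" "6 \<le> x" "6 \<le> y" "0 \<le> b" "0 \<le> c"
  and R2: "bp*((x+1)*(x+2)) = b*(y*(y-1))"
  and R3: "cm*(n-j+1) = c*j"
  shows "cm*bp*(x+1) \<le> b*c*y"
proof -
  have i: "j*(y*(y-1)) \<le> y*((n-j+1)*(x+2))"
  proof -
    have "j*(y*(y-1)) = y*(x*(y-1)/2)" using assms(1) by simp
    also have "\<dots> \<le> y*(((x+2)*(y+2))/2)"
      using assms(3,4) by (intro mult_left_mono divide_right_mono mult_mono) auto
    also have "\<dots> = y*((n-j+1)*(x+2))"
    proof -
      have nj: "n-j+1 = (y+2)/2" using assms(1,2) by simp
      show ?thesis unfolding nj by (simp add: ac_simps)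
    qed
    finally show ?thesis .
  qed
  have "(cm*bp*(x+1))*((n-j+1)*(x+2)) = (b*c)*(j*(y*(y-1)))"
  proof -
    have "(cm*(n-j+1))*(bp*((x+1)*(x+2))) = (c*j)*(b*(y*(y-1)))" using R2 R3 by simp
    then show ?thesis by (simp add: ac_simps)
  qed
  also have "\<dots> \<le> (b*c)*(y*((n-j+1)*(x+2)))" by (rule mult_left_mono[OF i]) (use assms in simp)
  also have "\<dots> = (b*c*y)*((n-j+1)*(x+2))" by (simp add: ac_simps)
  finally show ?thesis
    by (rule mult_right_le_imp_le) (use assms in simp)
qed

lemma poly_lem:
  fixes x n :: real
  assumes "6 \<le> x" "x \<le> n" "16 \<le> n"
  shows "15*((x+2)*(3*x+3+(2*n-x))) \<le> 2*((2*n-3)*(2*n-5))*(x+1)"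
proof -
  have a: "(x+2)*(3*x+3+(2*n-x)) \<le> (x+2)*(4*n+3)"
    using assms by (intro mult_left_mono) auto
  have b: "7*(x+2) \<le> 8*(x+1)" using assms by simp
  have c: "15*8*(4*n+3) \<le> 14*((2*n-3)*(2*n-5))"
  proof -
    have "16*n \<le> n*n" using assms by (intro mult_right_mono) auto
    have "14*((2*n-3)*(2*n-5)) = 56*(n*n) - 224*n + 210" by (simp add: algebra_simps)
    have "15*8*(4*n+3) \<le> 56*(n*n) - 224*n + 210" using assms(3) \<open>16*n \<le> n*n\<close> by argo
    then show ?thesis by (simp only: \<open>14*((2*n-3)*(2*n-5)) = 56*(n*n) - 224*n + 210\<close>)
  qed
  have "7*(15*((x+2)*(3*x+3+(2*n-x)))) \<le> 15*(7*(x+2))*(4*n+3)"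
    using a by (simp add: algebra_simps)
  also have "\<dots> \<le> 15*(8*(x+1))*(4*n+3)"
    using b assms by (intro mult_right_mono mult_left_mono) auto
  also have "\<dots> = (15*8*(4*n+3))*(x+1)" by (simp add: algebra_simps)
  also have "\<dots> \<le> (14*((2*n-3)*(2*n-5)))*(x+1)"
    using c assms by (intro mult_right_mono) auto
  finally show ?thesis by (simp add: algebra_simps)
qed

lemma odd_core:
  fixes b c bm bp cm cp x y n j :: real
  assumes x: "x = 2*j" "y = 2*n - 2*j" "6 \<le> x" "x \<le> y" "16 \<le> n"
  and pos: "0 \<le> b" "0 \<le> c" "0 \<le> bm" "0 \<le> bp" "0 \<le> cm" "0 \<le> cp"
  and R1: "bm*((y+2)*(y+1)) = b*(x*(x-1))"
  and R2: "bp*((x+1)*(x+2)) = b*(y*(y-1))"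
  and R3: "cm*(n-j+1) = c*j"
  and R4: "cp*(j+1) = c*(n-j)"
  and KB: "(2*n-3)*(2*n-5)*c \<le> 15*b"
  shows "(bm+cm)*(bp+cp) \<le> (b-c)^2"
proof -
  have h1: "bm*bp*((x+2)*(x+1)) \<le> b^2*(x*(x+1))"
    using D1_lem[OF _ _ R1 R2] x by simp
  have h4': "cm*cp \<le> c^2" using D2_lem[OF _ _ pos(2) R3 R4] x by simp
  have h2': "bm*cp \<le> b*c" using D3_lem[OF x(1-4) pos(1,2) R1 R4] .
  have h3': "cm*bp*(x+1) \<le> b*c*y" using D4_lem[OF x(1,2,3) _ pos(1,2) R2 R3] x by simp
  have h2: "(x+2)*(x+1)*(bm*cp) \<le> (x+2)*(x+1)*(b*c)" using h2' x by (intro mult_left_mono) auto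
  have h3: "(x+2)*(cm*bp*(x+1)) \<le> (x+2)*(b*c*y)" using h3' x by (intro mult_left_mono) auto
  have h4: "(x+2)*(x+1)*(cm*cp) \<le> (x+2)*(x+1)*c^2" using h4' x by (intro mult_left_mono) auto
  have key: "c*(x+2)*(3*x+3+y) \<le> 2*b*(x+1)"
  proof -
    have yx: "y = 2*n - x" using x by simp
    have p: "15*((x+2)*(3*x+3+y)) \<le> 2*((2*n-3)*(2*n-5))*(x+1)"
      using poly_lem[of x n] x unfolding yx by simp
    have "15*(c*(x+2)*(3*x+3+y)) = c*(15*((x+2)*(3*x+3+y)))" by (simp add: algebra_simps)
    also have "\<dots> \<le> c*(2*((2*n-3)*(2*n-5))*(x+1))" using p pos by (intro mult_left_mono) auto
    also have "\<dots> = 2*(x+1)*((2*n-3)*(2*n-5)*c)" by (simp add: algebra_simps)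
    also have "\<dots> \<le> 2*(x+1)*(15*b)" using KB x by (intro mult_left_mono) auto
    also have "\<dots> = 15*(2*b*(x+1))" by (simp add: ac_simps)
    finally show ?thesis by simp
  qed
  have hK: "b*(c*(x+2)*(3*x+3+y)) \<le> b*(2*b*(x+1))" using key pos by (intro mult_left_mono) auto
  have eL: "(x+2)*(x+1)*((bm+cm)*(bp+cp)) = bm*bp*((x+2)*(x+1)) + (x+2)*(x+1)*(bm*cp) + (x+2)*(cm*bp*(x+1)) + (x+2)*(x+1)*(cm*cp)"
    by (simp add: algebra_simps)
  have eR: "(x+2)*(x+1)*(b-c)^2 = b^2*(x*(x+1)) + (x+2)*(x+1)*(b*c) + (x+2)*(b*c*y) + (x+2)*(x+1)*c^2 + (b*(2*b*(x+1)) - b*(c*(x+2)*(3*x+3+y)))"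
    by (simp add: algebra_simps power2_eq_square)
  have "(x+2)*(x+1)*((bm+cm)*(bp+cp)) \<le> (x+2)*(x+1)*(b-c)^2"
    unfolding eL eR using h1 h2 h3 h4 hK by linarith
  then show ?thesis by (rule mult_left_le_imp_le) (use x in simp)
qed

lemma even_core:
  fixes b c bm bp cm cp x y n j :: real
  assumes x: "x = 2*j" "y = 2*n - 2*j" "6 \<le> x" "6 \<le> y"
  and pos: "0 \<le> b" "0 \<le> c" "0 \<le> bm" "0 \<le> bp" "0 \<le> cm" "0 \<le> cp"
  and R1: "bm*((y+2)*(y+1)) = b*(x*(x-1))"
  and R2: "bp*((x+1)*(x+2)) = b*(y*(y-1))"
  and R3: "cm*(n-j+1) = c*j"
  and R4: "cp*(j+1) = c*(n-j)"
  shows "(bm-cm)*(bp-cp) \<le> (b+c)^2"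
proof -
  have h1: "bm*bp*((x+2)*(x+1)) \<le> b^2*(x*(x+1))"
    using D1_lem[OF _ _ R1 R2] x by simp
  have "bm*bp*((x+2)*(x+1)) \<le> b^2*((x+2)*(x+1))"
  proof -
    have "b^2*(x*(x+1)) \<le> b^2*((x+2)*(x+1))" using x by (intro mult_left_mono) auto
    then show ?thesis using h1 by linarith
  qed
  then have h1': "bm*bp \<le> b^2" by (rule mult_right_le_imp_le) (use x in simp)
  have h4': "cm*cp \<le> c^2" using D2_lem[OF _ _ pos(2) R3 R4] x by simp
  have "0 \<le> bm*cp" "0 \<le> cm*bp" "0 \<le> b*c" using pos by auto
  have e1: "(bm-cm)*(bp-cp) = bm*bp + cm*cp - bm*cp - cm*bp" by (simp add: algebra_simps)
  have e2: "(b+c)^2 = b^2 + c^2 + 2*(b*c)" by (simp add: algebra_simps power2_eq_square)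
  show ?thesis unfolding e1 e2 using h1' h4' \<open>0 \<le> bm*cp\<close> \<open>0 \<le> cm*bp\<close> \<open>0 \<le> b*c\<close> by linarith
qed


definition Fv :: "nat \<Rightarrow> nat \<Rightarrow> int" where
  "Fv n j = int (2*n choose (2*j)) + (-1)^j * (2*int n - 1) * int (n choose j)"

lemma Fv_real: "real_of_int (Fv n j) = bb n j + (-1)^j * cc n j"
  by (simp add: Fv_def bb_def cc_def)

lemma Zs0: "card (Zs m 0) = 1"
proof -
  have "Zs m 0 = {{}}"
  proof
    show "Zs m 0 \<subseteq> {{}}" using finite_of_vecs by (auto simp: Zs_def)
    show "{{}} \<subseteq> Zs m 0" by (auto simp: Zs_def zs_def cnt_def)
  qed
  then show ?thesis by simp
qed

lemma rb_int: "k \<le> N \<Longrightarrow> int (Suc k) * int (N choose Suc k) = (int N - int k) * int (N choose k)"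
proof -
  assume "k \<le> N"
  have "int (Suc k * (N choose Suc k)) = int ((N - k) * (N choose k))" using rb_nat by metis
  then have "int (Suc k) * int (N choose Suc k) = int (N - k) * int (N choose k)" by (simp only: of_nat_mult)
  then show ?thesis using \<open>k \<le> N\<close> by (simp add: of_nat_diff)
qed

lemma alg_step:
  fixes N f0 f1 A B D c0 c1 s j n :: int
  assumes "N = 2*n" "N*f0 = A + s*(N-1)*c0" "B = (2*j+2)*f1 + (N-2*j)*f0"
    "(2*j+2)*D = (N-2*j-1)*B" "(2*j+1)*B = (N-2*j)*A" "(j+1)*c1 = (n-j)*c0" "0 \<le> j"
  shows "N*f1 = D + (-s)*(N-1)*c1"
proof -
  have "(2*j+2)*(N*f1) = (2*j+2)*(D + (-s)*(N-1)*c1)" using assms(1-6) by algebra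
  moreover have "2*j+2 \<noteq> 0" using assms(7) by simp
  ultimately show ?thesis by simp
qed

lemma closed:
  assumes "2^m = 2*n"
  shows "j \<le> n \<Longrightarrow> int (2*n) * int (card (Zs m (2*j))) = Fv n j"
proof (induction j)
  case 0
  then show ?case by (simp add: Zs0 Fv_def)
next
  case (Suc j)
  then have jn: "j < n" by simp
  have IH: "int (2*n) * int (card (Zs m (2*j))) = Fv n j" using Suc by simp
  have rec: "(2*n choose Suc (2*j)) = Suc (Suc (2*j)) * card (Zs m (Suc (Suc (2*j)))) + (2*n - 2*j) * card (Zs m (2*j))"
    using recurrence[of m "2*j"] assms by simp
  have rec': "int (2*n choose Suc (2*j)) = (2*int j+2) * int (card (Zs m (2*Suc j))) + (2*int n - 2*int j) * int (card (Zs m (2*j)))"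
  proof -
    have "int (2*n choose Suc (2*j)) = int (Suc (Suc (2*j)) * card (Zs m (Suc (Suc (2*j)))) + (2*n - 2*j) * card (Zs m (2*j)))"
      using rec by simp
    also have "\<dots> = int (Suc (Suc (2*j))) * int (card (Zs m (Suc (Suc (2*j))))) + int (2*n - 2*j) * int (card (Zs m (2*j)))"
      by (simp only: of_nat_add of_nat_mult)
    also have "int (2*n - 2*j) = 2*int n - 2*int j" using jn by (simp add: of_nat_diff)
    also have "int (Suc (Suc (2*j))) = 2*int j+2" by simp
    also have "Suc (Suc (2*j)) = 2*Suc j" by simp
    finally show ?thesis .
  qed
  have id1: "(2*int j+2) * int (2*n choose (2*Suc j)) = (2*int n - 2*int j - 1) * int (2*n choose Suc (2*j))"
    using rb_int[of "Suc (2*j)" "2*n"] jn by (simp add: algebra_simps)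
  have id2: "(2*int j+1) * int (2*n choose Suc (2*j)) = (2*int n - 2*int j) * int (2*n choose (2*j))"
    using rb_int[of "2*j" "2*n"] jn by (simp add: algebra_simps)
  have id3: "(int j+1) * int (n choose Suc j) = (int n - int j) * int (n choose j)"
    using rb_int[of j n] jn by (simp add: algebra_simps)
  have IH': "(2*int n) * int (card (Zs m (2*j))) = int (2*n choose (2*j)) + (-1)^j * (2*int n - 1) * int (n choose j)"
    using IH by (simp add: Fv_def)
  have "(2*int n) * int (card (Zs m (2*Suc j))) = int (2*n choose (2*Suc j)) + (- ((-1)^j)) * (2*int n - 1) * int (n choose Suc j)"
    by (rule alg_step[OF refl IH' rec' id1 id2 id3]) simp
  then show ?case by (simp add: Fv_def)
qed

lemma Fv_sym:
  assumes "even n" "j \<le> n"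
  shows "Fv n (n-j) = Fv n j"
proof -
  have a: "(2*n choose (2*(n-j))) = (2*n choose (2*j))"
  proof -
    have "2*(n-j) = 2*n - 2*j" by simp
    then show ?thesis using binomial_symmetric[of "2*j" "2*n"] assms by simp
  qed
  have b: "(n choose (n-j)) = (n choose j)" using binomial_symmetric[of j n] assms by simp
  have c: "((-1::int)^(n-j)) = (-1)^j"
  proof -
    have "even ((n-j) + j)" using assms by simp
    then have "even (n-j) = even j" by simp
    then show ?thesis by (cases "even j") (simp_all add: neg_one_even_power neg_one_odd_power)
  qed
  show ?thesis unfolding Fv_def a b c ..
qed


lemma bb_nonneg: "0 \<le> bb n j" by (simp add: bb_def)
lemma cc_nonneg: "1 \<le> n \<Longrightarrow> 0 \<le> cc n j" by (simp add: cc_def)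

lemma lc_half:
  assumes "even n" "16 \<le> n" "3 \<le> j" "2*j \<le> n"
  shows "real_of_int (Fv n (j-1)) * real_of_int (Fv n (j+1)) \<le> (real_of_int (Fv n j))^2"
proof -
  define x where "x = 2*real j"
  define y where "y = 2*real n - 2*real j"
  have xy: "x = 2*real j" "y = 2*real n - 2*real j" "6 \<le> x" "x \<le> y" "16 \<le> real n" "6 \<le> y"
    using assms unfolding x_def y_def by simp_all
  have r1: "bb n (j-1) * ((y+2)*(y+1)) = bb n j * (x*(x-1))"
    using R1[of j n] assms unfolding x_def y_def by simp
  have r2: "bb n (j+1) * ((x+1)*(x+2)) = bb n j * (y*(y-1))"
    using R2[of j n] assms unfolding x_def y_def by simp
  have r3: "cc n (j-1) * (real n - real j + 1) = cc n j * real j"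
    using R3[of j n] assms by simp
  have r4: "cc n (j+1) * (real j + 1) = cc n j * (real n - real j)"
    using R4[of j n] assms by simp
  have kb: "(2*real n-3)*(2*real n-5)*cc n j \<le> 15 * bb n j" using KB[of j n] assms by simp
  have cn: "\<And>i. 0 \<le> cc n i" using assms cc_nonneg by simp
  show ?thesis
  proof (cases "odd j")
    case True
    have s: "(-1::real)^j = -1" "(-1::real)^(j-1) = 1" "(-1::real)^(j+1) = 1"
      using True assms by (simp_all add: neg_one_even_power neg_one_odd_power)
    have "(bb n (j-1) + cc n (j-1)) * (bb n (j+1) + cc n (j+1)) \<le> (bb n j - cc n j)^2"
      by (rule odd_core[OF xy(1-5) bb_nonneg cn bb_nonneg bb_nonneg cn cn r1 r2 r3 r4 kb])
    then show ?thesis unfolding Fv_real s by simp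
  next
    case False
    have s: "(-1::real)^j = 1" "(-1::real)^(j-1) = -1" "(-1::real)^(j+1) = -1"
      using False assms by (simp_all add: neg_one_even_power neg_one_odd_power)
    have "(bb n (j-1) - cc n (j-1)) * (bb n (j+1) - cc n (j+1)) \<le> (bb n j + cc n j)^2"
      by (rule even_core[OF xy(1,2,3,6) bb_nonneg cn bb_nonneg bb_nonneg cn cn r1 r2 r3 r4])
    then show ?thesis unfolding Fv_real s by simp
  qed
qed

lemma lc_all:
  assumes "even n" "16 \<le> n" "3 \<le> j" "j + 3 \<le> n"
  shows "real_of_int (Fv n (j-1)) * real_of_int (Fv n (j+1)) \<le> (real_of_int (Fv n j))^2"
proof (cases "2*j \<le> n")
  case True
  then show ?thesis using lc_half assms by blast
next
  case False
  define j' where "j' = n - j"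
  have j': "3 \<le> j'" "2*j' \<le> n" using assms False unfolding j'_def by simp_all
  have e1: "Fv n (j-1) = Fv n (j'+1)"
    using Fv_sym[of n "j-1"] assms unfolding j'_def by (simp add: Suc_diff_le)
  have e2: "Fv n (j+1) = Fv n (j'-1)"
    using Fv_sym[of n "j+1"] assms unfolding j'_def by simp
  have e3: "Fv n j = Fv n j'"
    using Fv_sym[of n j] assms unfolding j'_def by simp
  show ?thesis unfolding e1 e2 e3 using lc_half[OF assms(1,2) j'] by (simp add: mult.commute)
qed

lemma pos_half:
  assumes "even n" "16 \<le> n" "2 \<le> j" "2*j \<le> n"
  shows "0 < Fv n j"
proof (cases "odd j")
  case True
  then have j3: "3 \<le> j" using assms by (cases "j = 2") auto
  have kb: "(2*real n-3)*(2*real n-5)*cc n j \<le> 15 * bb n j" using KB[of j n] assms j3 by simp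
  have cpos: "0 < cc n j" unfolding cc_def using assms by simp
  have "15*15 \<le> (2*real n-3)*(2*real n-5)"
  proof -
    have "15 \<le> 2*real n-3" "15 \<le> 2*real n-5" using assms by simp_all
    then show ?thesis by (intro mult_mono) auto
  qed
  then have "15*15*cc n j \<le> (2*real n-3)*(2*real n-5)*cc n j" using cpos by (intro mult_right_mono) auto
  then have "cc n j < bb n j" using kb cpos by linarith
  then have "0 < real_of_int (Fv n j)" unfolding Fv_real using True by simp
  then show ?thesis by simp
next
  case False
  have "0 < bb n j" unfolding bb_def using assms by simp
  moreover have "0 \<le> cc n j" using assms cc_nonneg by simp
  ultimately have "0 < real_of_int (Fv n j)" unfolding Fv_real using False
    by (simp add: neg_one_even_power)
  then show ?thesis by simp
qed

lemma pos_all: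
  assumes "even n" "16 \<le> n" "2 \<le> j" "j + 2 \<le> n"
  shows "0 < Fv n j"
proof (cases "2*j \<le> n")
  case True then show ?thesis using pos_half assms by blast
next
  case False
  have "Fv n j = Fv n (n-j)" using Fv_sym[of n j] assms by simp
  moreover have "0 < Fv n (n-j)" using pos_half[of n "n-j"] assms False by simp
  ultimately show ?thesis by simp
qed

lemma Fv1: "1 \<le> n \<Longrightarrow> Fv n 1 = 0"
proof -
  assume n: "1 \<le> n"
  have a: "int (Suc 1) * int (2*n choose Suc 1) = (int (2*n) - int 1) * int (2*n choose 1)"
    by (rule rb_int) (use n in simp)
  then have "2 * int (2*n choose 2) = (2*int n - 1) * (2*int n)" by (simp add: numeral_2_eq_2)
  then have "int (2*n choose 2) = (2*int n - 1) * int n" by simp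
  then show ?thesis by (simp add: Fv_def algebra_simps numeral_2_eq_2)
qed

lemma Fv0: "Fv n 0 = 2 * int n" by (simp add: Fv_def)

lemma j2_cond:
  assumes "16 \<le> n"
  shows "2*real n * real_of_int (Fv n 3) \<le> (real_of_int (Fv n 2))^2"
proof -
  have r0: "bb n 1 * 2 = bb n 0 * ((2*real n)*(2*real n - 1))"
    using R2[of 0 n] assms by (simp add: algebra_simps)
  have r1: "bb n 2 * 12 = bb n 1 * ((2*real n - 2)*(2*real n - 3))"
    using R2[of 1 n] assms by (simp add: algebra_simps numeral_2_eq_2)
  have r2: "bb n 3 * 30 = bb n 2 * ((2*real n - 4)*(2*real n - 5))"
    using R2[of 2 n] assms by (simp add: algebra_simps numeral_3_eq_3)
  have b0: "bb n 0 = 1" by (simp add: bb_def)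
  have b1: "bb n 1 = real n * (2*real n - 1)" using r0 b0 by simp
  have b2: "12 * bb n 2 = real n * (2*real n - 1) * ((2*real n - 2)*(2*real n - 3))"
    using r1 b1 by simp
  have b3: "30 * bb n 3 = bb n 2 * ((2*real n - 4)*(2*real n - 5))" using r2 by simp
  have b2pos: "0 \<le> bb n 2" by (rule bb_nonneg)
  have key: "2*real n * ((2*real n - 4)*(2*real n - 5)) \<le> 30 * bb n 2"
  proof -
    have i1: "(2*real n - 4)*(2*real n - 5) \<le> (2*real n - 2)*(2*real n - 3)"
      using assms by (intro mult_mono) auto
    have i2: "2 \<le> (5/2)*(2*real n - 1)" using assms by simp
    have "2*real n * ((2*real n - 4)*(2*real n - 5)) \<le> 2*real n * ((2*real n - 2)*(2*real n - 3))"
      using i1 by (intro mult_left_mono) auto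
    also have "\<dots> = (real n * 2) * ((2*real n - 2)*(2*real n - 3))" by simp
    also have "\<dots> \<le> (real n * ((5/2)*(2*real n - 1))) * ((2*real n - 2)*(2*real n - 3))"
      using i2 assms by (intro mult_right_mono mult_left_mono) auto
    also have "\<dots> = (5/2) * (real n * (2*real n - 1) * ((2*real n - 2)*(2*real n - 3)))"
      by (simp only: mult_ac)
    also have "\<dots> = (5/2) * (12 * bb n 2)" using b2 by simp
    also have "\<dots> = 30 * bb n 2" by simp
    finally show ?thesis .
  qed
  have "30 * (2*real n * bb n 3) = 2*real n * (30 * bb n 3)" by (simp only: mult_ac)
  also have "\<dots> = 2*real n * (bb n 2 * ((2*real n - 4)*(2*real n - 5)))" by (simp only: b3)
  also have "\<dots> = bb n 2 * (2*real n * ((2*real n - 4)*(2*real n - 5)))" by (simp only: mult_ac)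
  also have "\<dots> \<le> bb n 2 * (30 * bb n 2)" using key b2pos by (intro mult_left_mono) auto
  finally have "2*real n * bb n 3 \<le> (bb n 2)^2" by (simp add: power2_eq_square)
  moreover have "real_of_int (Fv n 3) \<le> bb n 3" unfolding Fv_real using cc_nonneg[of n 3] assms by simp
  moreover have "bb n 2 \<le> real_of_int (Fv n 2)" unfolding Fv_real using cc_nonneg[of n 2] assms by simp
  ultimately show ?thesis using b2pos assms
    by (smt (verit, best) mult_left_mono of_nat_0_le_iff power_mono)
qed


lemma filt_even:
  "filter (\<lambda>x. x \<noteq> 0) (map (\<lambda>w. if even w then a (w div 2) else 0) [0..<Suc (2*n)])
   = filter (\<lambda>x. x \<noteq> (0::nat)) (map a [0..<Suc n])"
proof (induction n)
  case 0
  then show ?case by simp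
next
  case (Suc n)
  have u1: "[0..<Suc (2*Suc n)] = [0..<Suc (2*n)] @ [Suc (2*n), Suc (Suc (2*n))]" by simp
  have u2: "[0..<Suc (Suc n)] = [0..<Suc n] @ [Suc n]" by simp
  have d: "Suc (Suc (2*n)) div 2 = Suc n" by simp
  show ?case unfolding u1 u2 using Suc d by simp
qed

lemma upt_split: "i \<le> j \<Longrightarrow> j \<le> k \<Longrightarrow> [i..<k] = [i..<j] @ [j..<k]"
  using upt_add_eq_append[of i j "k-j"] by simp

lemma filt_struct:
  fixes a :: "nat \<Rightarrow> nat"
  assumes "4 \<le> n" "a 1 = 0" "a (n-1) = 0" "a 0 = 1" "a n = 1" "\<forall>j. 2 \<le> j \<and> j+2 \<le> n \<longrightarrow> 0 < a j"
  shows "filter (\<lambda>x. x\<noteq>0) (map a [0..<Suc n]) = map (\<lambda>j. if j = 1 \<or> j = n-1 then 1 else a j) [1..<n]"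
proof -
  have u1: "[0..<Suc n] = [0,1] @ [2..<n-1] @ [n-1, n]"
  proof -
    have "[0..<Suc n] = [0..<2] @ [2..<Suc n]" by (rule upt_split) (use assms in simp_all)
    moreover have "[2..<Suc n] = [2..<n-1] @ [n-1..<Suc n]" by (rule upt_split) (use assms in simp_all)
    moreover have "[n-1..<Suc n] = [n-1, n]" using assms by (simp add: upt_rec)
    moreover have "[0..<2] = [0,1::nat]" by (simp add: upt_rec)
    ultimately show ?thesis by simp
  qed
  have u2: "[1..<n] = [1] @ [2..<n-1] @ [n-1]"
  proof -
    have "[1..<n] = [1..<2] @ [2..<n]" by (rule upt_split) (use assms in simp_all)
    moreover have "[2..<n] = [2..<n-1] @ [n-1..<n]" by (rule upt_split) (use assms in simp_all)
    moreover have "[n-1..<n] = [n-1]" using assms by (simp add: upt_rec)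
    moreover have "[1..<2] = [1::nat]" by (simp add: upt_rec)
    ultimately show ?thesis by simp
  qed
  have f: "filter (\<lambda>x. x\<noteq>0) (map a [2..<n-1]) = map a [2..<n-1]"
    using assms(6) by (intro filter_True) auto
  have g: "map (\<lambda>j. if j = 1 \<or> j = n-1 then 1 else a j) [2..<n-1] = map a [2..<n-1]"
    by (rule map_cong) auto
  have n1: "n - 1 \<noteq> 1" using assms by simp
  show ?thesis unfolding u1 u2 using f g assms n1 by simp
qed

lemma lcs:
  assumes "\<forall>j. 2 \<le> j \<and> j+2 \<le> n \<longrightarrow> g (j-1) * g (j+1) \<le> (g j)^2"
  shows "log_concave_seq (map g [1..<n])"
  unfolding log_concave_seq_def
proof (intro allI impI)
  fix i assume i: "1 \<le> i \<and> i + 1 < length (map g [1..<n])"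
  then have i': "1 \<le> i" "i + 3 \<le> n" by auto
  have "map g [1..<n] ! (i-1) = g i" using i' by simp
  moreover have "map g [1..<n] ! (i+1) = g (i+2)" using i' by simp
  moreover have "map g [1..<n] ! i = g (i+1)" using i' by simp
  moreover have "g i * g (i+2) \<le> (g (i+1))^2" using assms[rule_format, of "i+1"] i' by simp
  ultimately show "map g [1..<n] ! (i-1) * map g [1..<n] ! (i+1) \<le> (map g [1..<n] ! i)^2" by simp
qed

lemma conv:
  fixes p q r :: nat
  assumes "0 < N" "int N * int p = P" "int N * int q = Q" "int N * int r = R"
    "real_of_int P * real_of_int Q \<le> (real_of_int R)^2"
  shows "p*q \<le> r^2"
proof -
  have "real N * real p * (real N * real q) \<le> (real N * real r)^2"
    using assms(2-5) by (metis of_int_of_nat_eq of_int_mult of_nat_mult)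
  then have "(real N)^2 * (real p * real q) \<le> (real N)^2 * (real r)^2"
    by (simp add: power2_eq_square mult_ac)
  then have "real p * real q \<le> (real r)^2" using assms(1) by simp
  then have "real (p*q) \<le> real (r^2)" by simp
  then show ?thesis by linarith
qed


lemma small8: "Fv 8 2 = 2240" "Fv 8 3 = 7168" "Fv 8 4 = 13920"
proof -
  have b0: "bb 8 0 = 1" by (simp add: bb_def)
  have "bb 8 1 * 2 = bb 8 0 * 240" using R2[of 0 8] by simp
  then have b1: "bb 8 1 = 120" using b0 by simp
  have "bb 8 2 * 12 = bb 8 1 * 182" using R2[of 1 8] by (simp add: numeral_2_eq_2)
  then have b2: "bb 8 2 = 1820" using b1 by simp
  have "bb 8 3 * 30 = bb 8 2 * 132" using R2[of 2 8] by (simp add: numeral_3_eq_3)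
  then have b3: "bb 8 3 = 8008" using b2 by simp
  have e4: "(3::nat) + 1 = 4" by simp
  have "bb 8 4 * 56 = bb 8 3 * 90" using R2[of 3 8] unfolding e4 by simp
  then have b4: "bb 8 4 = 12870" using b3 by simp
  have c0: "cc 8 0 = 15" by (simp add: cc_def)
  have "cc 8 1 = cc 8 0 * 8" using R4[of 0 8] by simp
  then have c1: "cc 8 1 = 120" using c0 by simp
  have "cc 8 2 * 2 = cc 8 1 * 7" using R4[of 1 8] by (simp add: numeral_2_eq_2)
  then have c2: "cc 8 2 = 420" using c1 by simp
  have "cc 8 3 * 3 = cc 8 2 * 6" using R4[of 2 8] by (simp add: numeral_3_eq_3)
  then have c3: "cc 8 3 = 840" using c2 by simp
  have "cc 8 4 * 4 = cc 8 3 * 5" using R4[of 3 8] unfolding e4 by simp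
  then have c4: "cc 8 4 = 1050" using c3 by simp
  have "real_of_int (Fv 8 2) = 2240" unfolding Fv_real b2 c2 by simp
  then show "Fv 8 2 = 2240" by linarith
  have "real_of_int (Fv 8 3) = 7168" unfolding Fv_real b3 c3 by simp
  then show "Fv 8 3 = 7168" by linarith
  have "real_of_int (Fv 8 4) = 13920" unfolding Fv_real b4 c4 by simp
  then show "Fv 8 4 = 13920" by linarith
qed

lemma small4: "Fv 4 2 = 112"
proof -
  have b0: "bb 4 0 = 1" by (simp add: bb_def)
  have "bb 4 1 * 2 = bb 4 0 * 56" using R2[of 0 4] by simp
  then have b1: "bb 4 1 = 28" using b0 by simp
  have "bb 4 2 * 12 = bb 4 1 * 30" using R2[of 1 4] by (simp add: numeral_2_eq_2)
  then have b2: "bb 4 2 = 70" using b1 by simp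
  have c0: "cc 4 0 = 7" by (simp add: cc_def)
  have "cc 4 1 = cc 4 0 * 4" using R4[of 0 4] by simp
  then have c1: "cc 4 1 = 28" using c0 by simp
  have "cc 4 2 * 2 = cc 4 1 * 3" using R4[of 1 4] by (simp add: numeral_2_eq_2)
  then have c2: "cc 4 2 = 42" using c1 by simp
  have "real_of_int (Fv 4 2) = 112" unfolding Fv_real b2 c2 by simp
  then show "Fv 4 2 = 112" by linarith
qed


theorem mainTheorem2:
  fixes m :: nat
  assumes "m \<ge> 3"
  shows "log_concave_code (2 ^ m) (ext_hamming_code m)"
proof -
  define n :: nat where "n = 2^(m-1)"
  have N: "2^m = 2*n" unfolding n_def using assms by (cases m) auto
  have n4: "4 \<le> n"
  proof -
    have "(2::nat)^2 \<le> 2^(m-1)" using assms by (intro power_increasing) auto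
    then show ?thesis by (simp add: n_def)
  qed
  have ev: "even n" unfolding n_def using assms by (cases "m-1") auto
  have ncases: "n = 4 \<or> n = 8 \<or> 16 \<le> n"
  proof -
    consider "m = 3" | "m = 4" | "5 \<le> m" using assms by linarith
    then show ?thesis
    proof cases
      case 3
      have "(2::nat)^4 \<le> 2^(m-1)" using 3 by (intro power_increasing) auto
      then show ?thesis by (simp add: n_def)
    qed (simp_all add: n_def)
  qed
  define a where "a = (\<lambda>j. card (Zs m (2*j)))"
  define aa where "aa = (\<lambda>j. if j = 1 \<or> j = n-1 then 1 else a j)"
  have ha: "int (2*n) * int (a j) = Fv n j" if "j \<le> n" for j
    using closed[OF N that] by (simp add: a_def)
  have hv: "a j = v" if "j \<le> n" "Fv n j = int (2*n) * int v" for j v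
  proof -
    have "int (2*n) * int (a j) = int (2*n) * int v" using ha[OF that(1)] that(2) by simp
    then show ?thesis using n4 by simp
  qed
  have a0: "a 0 = 1" by (rule hv) (simp_all add: Fv0)
  have a1: "a 1 = 0" by (rule hv) (use n4 Fv1 in simp_all)
  have an1: "a (n-1) = 0"
  proof (rule hv)
    have "Fv n (n-1) = Fv n 1" using Fv_sym[of n 1] ev n4 by simp
    then show "Fv n (n-1) = int (2*n) * int 0" using Fv1 n4 by simp
  qed simp
  have an: "a n = 1"
  proof (rule hv)
    have "Fv n n = Fv n 0" using Fv_sym[of n 0] ev by simp
    then show "Fv n n = int (2*n) * int 1" by (simp add: Fv0)
  qed simp
  have posF: "0 < a j" if "j \<le> n" "0 < Fv n j" for j
  proof -
    have "0 < int (2*n) * int (a j)" using ha[OF that(1)] that(2) by simp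
    then show ?thesis by (simp add: zero_less_mult_iff)
  qed
  have convF: "p*q \<le> r^2" if "int (2*n) * int p = P" "int (2*n) * int q = Q" "int (2*n) * int r = R"
    "real_of_int P * real_of_int Q \<le> (real_of_int R)^2" for p q r P Q R
    by (rule conv[OF _ that]) (use n4 in simp)
  have main: "(\<forall>j. 2 \<le> j \<and> j+2 \<le> n \<longrightarrow> 0 < a j) \<and>
              (\<forall>j. 2 \<le> j \<and> j+2 \<le> n \<longrightarrow> aa (j-1) * aa (j+1) \<le> (aa j)^2)"
  proof -
    consider "n = 4" | "n = 8" | "16 \<le> n" using ncases by blast
    then show ?thesis
    proof cases
      case 1
      have a2: "a 2 = 14" by (rule hv) (use 1 small4 in simp_all)
      show ?thesis
      proof (intro conjI allI impI)
        fix j assume "2 \<le> j \<and> j+2 \<le> n"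
        then have j: "j = 2" using 1 by simp
        show "0 < a j" using a2 j by simp
        show "aa (j-1) * aa (j+1) \<le> (aa j)^2" using a2 j 1 by (simp add: aa_def)
      qed
    next
      case 2
      have a2: "a 2 = 140" by (rule hv) (use 2 small8 in simp_all)
      have a3: "a 3 = 448" by (rule hv) (use 2 small8 in simp_all)
      have a4: "a 4 = 870" by (rule hv) (use 2 small8 in simp_all)
      have a5: "a 5 = 448"
      proof (rule hv)
        have "Fv 8 (8-3) = Fv 8 3" by (rule Fv_sym) simp_all
        then show "Fv n 5 = int (2*n) * int 448" using 2 small8 by simp
      qed (use 2 in simp)
      have a6: "a 6 = 140"
      proof (rule hv)
        have "Fv 8 (8-2) = Fv 8 2" by (rule Fv_sym) simp_all
        then show "Fv n 6 = int (2*n) * int 140" using 2 small8 by simp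
      qed (use 2 in simp)
      show ?thesis
      proof (intro conjI allI impI)
        fix j assume "2 \<le> j \<and> j+2 \<le> n"
        then have j: "j = 2 \<or> j = 3 \<or> j = 4 \<or> j = 5 \<or> j = 6" using 2 by auto
        show "0 < a j" using a2 a3 a4 a5 a6 j by auto
        show "aa (j-1) * aa (j+1) \<le> (aa j)^2" using a2 a3 a4 a5 a6 j 2 by (auto simp: aa_def)
      qed
    next
      case 3
      show ?thesis
      proof (intro conjI allI impI)
        fix j assume j: "2 \<le> j \<and> j+2 \<le> n"
        show "0 < a j" using posF[of j] pos_all[of n j] ev 3 j by simp
        show "aa (j-1) * aa (j+1) \<le> (aa j)^2"
        proof -
          consider "j = 2" | "j = n-2" | "3 \<le> j \<and> j+3 \<le> n" using j 3 by linarith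
          then show ?thesis
          proof cases
            case 1
            have "1 * a 3 \<le> (a 2)^2"
            proof (rule convF)
              show "int (2*n) * int 1 = int (2*n)" by simp
              show "int (2*n) * int (a 3) = Fv n 3" using ha 3 by simp
              show "int (2*n) * int (a 2) = Fv n 2" using ha 3 by simp
              show "real_of_int (int (2*n)) * real_of_int (Fv n 3) \<le> (real_of_int (Fv n 2))^2"
                using j2_cond[of n] 3 by simp
            qed
            moreover have "n - 1 \<noteq> 2" "n - 1 \<noteq> 3" "(2::nat) - 1 = 1" "(2::nat) + 1 = 3" using 3 by simp_all
            ultimately show ?thesis using 1 by (simp add: aa_def)
          next
            case 2
            have e3: "Fv n (n-3) = Fv n 3" by (rule Fv_sym) (use ev 3 in simp_all)
            have e2: "Fv n (n-2) = Fv n 2" by (rule Fv_sym) (use ev 3 in simp_all)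
            have "a (n-3) * 1 \<le> (a (n-2))^2"
            proof (rule convF)
              show "int (2*n) * int 1 = int (2*n)" by simp
              show "int (2*n) * int (a (n-3)) = Fv n 3" using ha[of "n-3"] e3 by simp
              show "int (2*n) * int (a (n-2)) = Fv n 2" using ha[of "n-2"] e2 by simp
              show "real_of_int (Fv n 3) * real_of_int (int (2*n)) \<le> (real_of_int (Fv n 2))^2"
                using j2_cond[of n] 3 by (simp add: mult.commute)
            qed
            moreover have "n - 2 - 1 = n - 3" "n - 2 + 1 = n - 1" using 3 by simp_all
            ultimately show ?thesis using 2 3 by (simp add: aa_def)
          next
            case 3
            have "a (j-1) * a (j+1) \<le> (a j)^2"
            proof (rule convF)
              show "int (2*n) * int (a (j-1)) = Fv n (j-1)" using ha[of "j-1"] 3 by auto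
              show "int (2*n) * int (a (j+1)) = Fv n (j+1)" using ha[of "j+1"] 3 by auto
              show "int (2*n) * int (a j) = Fv n j" using ha[of j] 3 by auto
              show "real_of_int (Fv n (j-1)) * real_of_int (Fv n (j+1)) \<le> (real_of_int (Fv n j))^2"
                using lc_all[of n j] ev 3 \<open>16 \<le> n\<close> by simp
            qed
            moreover have "aa (j-1) = a (j-1)" "aa (j+1) = a (j+1)" "aa j = a j"
              using 3 \<open>16 \<le> n\<close> unfolding aa_def by auto
            ultimately show ?thesis by simp
          qed
        qed
      qed
    qed
  qed
  have wc: "map (weight_count (ext_hamming_code m)) [0..<Suc (2^m)]
          = map (\<lambda>w. if even w then a (w div 2) else 0) [0..<Suc (2*n)]"
    unfolding N
  proof (rule map_cong)
    fix w assume "w \<in> set [0..<Suc (2*n)]"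
    show "weight_count (ext_hamming_code m) w = (if even w then a (w div 2) else 0)"
    proof (cases "even w")
      case True
      then have "2 * (w div 2) = w" by simp
      then show ?thesis using True by (simp add: wc_ext a_def)
    next
      case False
      then show ?thesis by (simp add: wc_ext)
    qed
  qed simp
  have "nonzero_weight_distribution (2^m) (ext_hamming_code m) = map aa [1..<n]"
    unfolding nonzero_weight_distribution_def wc filt_even aa_def
    by (rule filt_struct) (use n4 a0 a1 an1 an main in simp_all)
  then show ?thesis unfolding log_concave_code_def
    using lcs[of n aa] main by simp
qed


end
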